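(* Let $L\subseteq B_i$ be an SINR-feasible set of links contained in a single bucket $B_i$. Then there is a constant $C$ depending only on $\alpha,\beta,\varepsilon$ such that for every $e\in B_i$, \[\sum_{\{e'\in L:d_{e'}\ge d_e\}}\bar a_e(e')\le C.\]
   Context: Constants: $\alpha\ge0$, $N>0$, $\beta>0$. Nodes lie in the Euclidean plane. A link is $e=(s_e,r_e,P_e)$ with transmitter, receiver, power $P_e>0$; $\mathcal{L}$ is the set of links. $d_e=d(s_e,r_e)$, $d_{e'e}=d(s_{e'},r_e)$, $S_e=P_e/d_e^\alpha$, $S_{e'e}=P_{e'}/d_{e'e}^\alpha$, $\gamma_e=\beta S_e/(S_e-\beta N)$. Affectances: $\hat a_{e'}(e)=S_{e'e}/S_e$, $a_{e'}(e)=\gamma_e\hat a_{e'}(e)$, $\bar a_{e'}(e)=\min\{1,a_{e'}(e)\}$. $L$ is SINR-feasible if $S_e/(N+\sum_{e'\in L\setminus\{e\}}S_{e'e})\ge\beta$ for all $e\in L$. Buckets: $S_{\min}=\min_{e\in\mathcal{L}}S_e$, $B_i=\{e\in\mathcal{L}:2^iS_{\min}\le S_e<2^{i+1}S_{\min}\}$. Standing assumption: there is a constant $\varepsilon>0$ with $S_e/N\ge(1+\varepsilon)\beta$ for all $e\in\mathcal{L}$. *)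

theory Defs
  imports "HOL-Analysis.Analysis"
begin

type_synonym point = "real ^ 2"
type_synonym link = "point \<times> point \<times> real"

definition sndr :: "link \<Rightarrow> point" where "sndr e = fst e"
definition rcvr :: "link \<Rightarrow> point" where "rcvr e = fst (snd e)"
definition pw :: "link \<Rightarrow> real" where "pw e = snd (snd e)"

definition dlen :: "link \<Rightarrow> real" where "dlen e = dist (sndr e) (rcvr e)"

definition dcross :: "link \<Rightarrow> link \<Rightarrow> real" where
  "dcross e' e = dist (sndr e') (rcvr e)"

definition sig :: "real \<Rightarrow> link \<Rightarrow> real" where
  "sig \<alpha> e = pw e / (dlen e powr \<alpha>)"

definition sigx :: "real \<Rightarrow> link \<Rightarrow> link \<Rightarrow> real" where
  "sigx \<alpha> e' e = pw e' / (dcross e' e powr \<alpha>)"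

definition gam :: "real \<Rightarrow> real \<Rightarrow> real \<Rightarrow> link \<Rightarrow> real" where
  "gam \<alpha> N \<beta> e = \<beta> * sig \<alpha> e / (sig \<alpha> e - \<beta> * N)"

definition ahat :: "real \<Rightarrow> link \<Rightarrow> link \<Rightarrow> real" where
  "ahat \<alpha> e' e = sigx \<alpha> e' e / sig \<alpha> e"

definition aff :: "real \<Rightarrow> real \<Rightarrow> real \<Rightarrow> link \<Rightarrow> link \<Rightarrow> real" where
  "aff \<alpha> N \<beta> e' e = gam \<alpha> N \<beta> e * ahat \<alpha> e' e"

text \<open>bar a_{e'}(e) = min 1 (a_{e'}(e)); if s_{e'} = r_e the affectance is infinite,
  so the truncated affectance is 1.\<close>
definition abar :: "real \<Rightarrow> real \<Rightarrow> real \<Rightarrow> link \<Rightarrow> link \<Rightarrow> real" where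
  "abar \<alpha> N \<beta> e' e = (if dcross e' e = 0 then 1 else min 1 (aff \<alpha> N \<beta> e' e))"

text \<open>SINR-feasibility; infinite interference (s_{e'} = r_e) makes a set infeasible.\<close>
definition sinr_feasible :: "real \<Rightarrow> real \<Rightarrow> real \<Rightarrow> link set \<Rightarrow> bool" where
  "sinr_feasible \<alpha> N \<beta> L \<longleftrightarrow>
     (\<forall>e\<in>L. (\<forall>e'\<in>L - {e}. dcross e' e > 0) \<and>
             sig \<alpha> e / (N + (\<Sum>e'\<in>L - {e}. sigx \<alpha> e' e)) \<ge> \<beta>)"

definition Smin :: "real \<Rightarrow> link set \<Rightarrow> real" where
  "Smin \<alpha> Ls = Min (sig \<alpha> ` Ls)"

definition bucket :: "real \<Rightarrow> link set \<Rightarrow> nat \<Rightarrow> link set" where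
  "bucket \<alpha> Ls i = {e \<in> Ls. 2 ^ i * Smin \<alpha> Ls \<le> sig \<alpha> e \<and> sig \<alpha> e < 2 ^ (i + 1) * Smin \<alpha> Ls}"

end

theory Submission
  imports Defs
begin

definition mm :: "real \<Rightarrow> real \<Rightarrow> real \<Rightarrow> real" where
  "mm \<alpha> d0 D = (if D = 0 then 1 else min 1 ((d0 / D) powr \<alpha>))"

lemma mm_le1: "mm \<alpha> d0 D \<le> 1" by (simp add: mm_def)
lemma mm_ge0: "mm \<alpha> d0 D \<ge> 0" by (simp add: mm_def)

lemma key_ratio:
  fixes a d0 D \<alpha> :: real
  assumes "d0 > 0" "a \<ge> d0" "D \<ge> 0" "\<alpha> \<ge> 0"
  shows "(a / (a + 2*D)) powr \<alpha> \<ge> (1/3) powr \<alpha> * mm \<alpha> d0 D"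
proof (cases "D \<le> a")
  case True
  have "1/3 \<le> a / (a + 2*D)" using True assms by (simp add: field_simps)
  hence "(1/3) powr \<alpha> \<le> (a / (a + 2*D)) powr \<alpha>" using assms by (intro powr_mono2) auto
  moreover have "(1/3) powr \<alpha> * mm \<alpha> d0 D \<le> (1/3) powr \<alpha>"
    using mm_le1[of \<alpha> d0 D] by (simp add: mult_left_le)
  ultimately show ?thesis by linarith
next
  case False
  hence Dp: "D > 0" using assms by linarith
  have "d0 / (3*D) \<le> a / (3*D)" using assms Dp by (intro divide_right_mono) auto
  also have "\<dots> \<le> a / (a + 2*D)" using assms Dp False by (intro divide_left_mono) auto
  finally have "d0 / (3*D) \<le> a / (a + 2*D)" .
  hence "(d0/(3*D)) powr \<alpha> \<le> (a / (a + 2*D)) powr \<alpha>" using assms Dp by (intro powr_mono2) auto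
  moreover have "(d0/(3*D)) powr \<alpha> = (1/3) powr \<alpha> * (d0/D) powr \<alpha>"
    using assms Dp by (simp add: powr_mult[symmetric])
  moreover have "mm \<alpha> d0 D \<le> (d0/D) powr \<alpha>" using Dp by (simp add: mm_def)
  ultimately show ?thesis by (smt (verit) mult_left_mono powr_ge_zero)
qed

lemma key_interf:
  fixes a d0 D Z p \<alpha> :: real
  assumes "d0 > 0" "a \<ge> d0" "D \<ge> 0" "\<alpha> \<ge> 0" "Z > 0" "Z \<le> a + 2*D" "p > 0"
  shows "p / Z powr \<alpha> \<ge> (p / a powr \<alpha>) * ((1/3) powr \<alpha> * mm \<alpha> d0 D)"
proof -
  have ap: "a > 0" using assms by linarith
  have "(a / (a + 2*D)) powr \<alpha> \<le> (a / Z) powr \<alpha>"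
    using assms ap by (intro powr_mono2) (auto intro!: divide_left_mono)
  with key_ratio[OF assms(1-4)] have "(1/3) powr \<alpha> * mm \<alpha> d0 D \<le> (a/Z) powr \<alpha>" by linarith
  hence "(p / a powr \<alpha>) * ((1/3) powr \<alpha> * mm \<alpha> d0 D) \<le> (p / a powr \<alpha>) * (a/Z) powr \<alpha>"
    using assms ap by (intro mult_left_mono) auto
  also have "\<dots> = p / Z powr \<alpha>" using ap assms by (simp add: powr_divide)
  finally show ?thesis .
qed



lemma min_scale: fixes K K' x :: real assumes "K \<ge> 1" "K \<ge> K'" "K' \<ge> 0" "x \<ge> 0"
  shows "min 1 (K' * x) \<le> K * min 1 x"
proof (cases "x \<le> 1")
  case True then show ?thesis using assms by (simp add: min_def mult_right_mono) (smt (verit) mult_right_mono)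
next
  case False then show ?thesis using assms by (simp add: min_def)
qed

lemma abar_bound:
  assumes "pw e > 0" "dlen e > 0" "\<alpha> \<ge> 0" "\<beta> > 0" "\<epsilon> > 0" "N > 0"
    "sig \<alpha> e \<le> 2 * sig \<alpha> f" "sig \<alpha> f / N \<ge> (1+\<epsilon>)*\<beta>"
  shows "abar \<alpha> N \<beta> e f \<le> max 1 (2*\<beta>*(1+\<epsilon>)/\<epsilon>) * mm \<alpha> (dlen e) (dcross e f)"
proof (cases "dcross e f = 0")
  case True then show ?thesis by (simp add: abar_def mm_def)
next
  case False
  define D where "D = dcross e f"
  have Dp: "D > 0" using False unfolding D_def dcross_def by auto
  define x where "x = (dlen e / D) powr \<alpha>"
  have x0: "x \<ge> 0" unfolding x_def by simp
  have sf: "sig \<alpha> f \<ge> (1+\<epsilon>)*\<beta>*N" using assms by (simp add: field_simps)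
  have sfp: "sig \<alpha> f > 0" using sf assms by (smt (verit) mult_pos_pos)
  have gden: "sig \<alpha> f - \<beta>*N \<ge> \<epsilon>*\<beta>*N" using sf by (simp add: algebra_simps)
  have gdp: "sig \<alpha> f - \<beta>*N > 0" using gden assms by (smt (verit) mult_pos_pos)
  have g0: "gam \<alpha> N \<beta> f \<ge> 0" unfolding gam_def using assms sfp gdp by simp
  have g1: "gam \<alpha> N \<beta> f \<le> \<beta>*(1+\<epsilon>)/\<epsilon>"
  proof -
    have "\<epsilon> * sig \<alpha> f \<le> (1+\<epsilon>) * (sig \<alpha> f - \<beta>*N)" using sf by (simp add: algebra_simps)
    hence "sig \<alpha> f / (sig \<alpha> f - \<beta>*N) \<le> (1+\<epsilon>)/\<epsilon>" using gdp assms
      by (simp add: divide_simps mult.commute)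
    hence "\<beta> * (sig \<alpha> f / (sig \<alpha> f - \<beta>*N)) \<le> \<beta> * ((1+\<epsilon>)/\<epsilon>)" using assms
      by (intro mult_left_mono) auto
    thus ?thesis unfolding gam_def by (metis times_divide_eq_right)
  qed
  have sx: "sigx \<alpha> e f = sig \<alpha> e * x"
    unfolding sigx_def sig_def x_def D_def using assms Dp[unfolded D_def]
    by (simp add: powr_divide)
  have "ahat \<alpha> e f = sig \<alpha> e * x / sig \<alpha> f" unfolding ahat_def sx ..
  also have "\<dots> \<le> 2 * sig \<alpha> f * x / sig \<alpha> f" using assms x0 sfp
    by (intro divide_right_mono mult_right_mono) auto
  also have "\<dots> = 2 * x" using sfp by simp
  finally have ah: "ahat \<alpha> e f \<le> 2 * x" .
  have ah0: "ahat \<alpha> e f \<ge> 0" unfolding ahat_def sigx_def using assms sfp by simp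
  have "aff \<alpha> N \<beta> e f \<le> (\<beta>*(1+\<epsilon>)/\<epsilon>) * (2*x)"
    unfolding aff_def using g0 g1 ah ah0 by (intro mult_mono) auto
  hence "min 1 (aff \<alpha> N \<beta> e f) \<le> min 1 ((2*\<beta>*(1+\<epsilon>)/\<epsilon>) * x)" by (simp add: min_def algebra_simps)
  also have "\<dots> \<le> max 1 (2*\<beta>*(1+\<epsilon>)/\<epsilon>) * min 1 x"
    using assms x0 by (intro min_scale) auto
  finally show ?thesis using False unfolding abar_def mm_def x_def D_def by simp
qed


lemma tri: "dcross f e0 \<le> dlen f + 2 * dcross e f" if "dcross e e0 \<le> dcross e f"
proof -
  have "dist (sndr f) (rcvr e0) \<le> dist (sndr f) (rcvr f) + dist (rcvr f) (rcvr e0)"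
    by (rule dist_triangle)
  moreover have "dist (rcvr f) (rcvr e0) \<le> dist (rcvr f) (sndr e) + dist (sndr e) (rcvr e0)"
    by (rule dist_triangle)
  moreover have "dist (rcvr f) (sndr e) = dcross e f" unfolding dcross_def by (simp add: dist_commute)
  ultimately show ?thesis using that unfolding dcross_def dlen_def by linarith
qed

theorem theorem2:
  fixes \<alpha> \<beta> \<epsilon> :: real
  assumes "\<alpha> \<ge> 0" and "\<beta> > 0" and "\<epsilon> > 0"
  shows "\<exists>C::real. \<forall>(N::real) (Ls::link set) (L::link set) (i::nat) (e::link).
           N > 0 \<and> finite Ls \<and>
           (\<forall>f\<in>Ls. pw f > 0 \<and> dlen f > 0 \<and> sig \<alpha> f / N \<ge> (1 + \<epsilon>) * \<beta>) \<and>
           L \<subseteq> bucket \<alpha> Ls i \<and> sinr_feasible \<alpha> N \<beta> L \<and> e \<in> bucket \<alpha> Ls i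
           \<longrightarrow> (\<Sum>e'\<in>{e'\<in>L. dlen e' \<ge> dlen e}. abar \<alpha> N \<beta> e e') \<le> C"
proof -
  define K where "K = max 1 (2*\<beta>*(1+\<epsilon>)/\<epsilon>)"
  define c where "c = (1/3::real) powr \<alpha>"
  have cp: "c > 0" unfolding c_def by simp
  have K1: "K \<ge> 1" unfolding K_def by simp
  define C where "C = K * (1 + 2/(\<beta>*c))"
  have C0: "C \<ge> 0" unfolding C_def using K1 cp assms by simp
  show ?thesis
  proof (intro exI[of _ C] allI impI, elim conjE)
    fix N Ls L i e
    assume Np: "N > 0" and fin: "finite Ls"
      and LsP: "\<forall>f\<in>Ls. pw f > 0 \<and> dlen f > 0 \<and> sig \<alpha> f / N \<ge> (1 + \<epsilon>) * \<beta>"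
      and LB: "L \<subseteq> bucket \<alpha> Ls i" and feas: "sinr_feasible \<alpha> N \<beta> L"
      and eB: "e \<in> bucket \<alpha> Ls i"
    define T where "T = {e'\<in>L. dlen e' \<ge> dlen e}"
    define m where "m f = mm \<alpha> (dlen e) (dcross e f)" for f
    have Bs: "bucket \<alpha> Ls i \<subseteq> Ls" unfolding bucket_def by auto
    have sig2: "sig \<alpha> x \<le> 2 * sig \<alpha> y" if "x \<in> bucket \<alpha> Ls i" "y \<in> bucket \<alpha> Ls i" for x y
    proof -
      have "sig \<alpha> x < 2 ^ (i + 1) * Smin \<alpha> Ls" "2 ^ i * Smin \<alpha> Ls \<le> sig \<alpha> y"
        using that unfolding bucket_def by blast+
      moreover have "(2::real) ^ (i + 1) * Smin \<alpha> Ls = 2 * (2 ^ i * Smin \<alpha> Ls)" by simp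
      ultimately show ?thesis by linarith
    qed
    have eLs: "e \<in> Ls" using eB Bs by auto
    have pe: "pw e > 0" "dlen e > 0" using LsP eLs by auto
    have finL: "finite L" by (rule finite_subset[OF order_trans[OF LB Bs] fin])
    have finT: "finite T" unfolding T_def using finL by simp
    have TL: "T \<subseteq> L" unfolding T_def by auto
    have ab: "abar \<alpha> N \<beta> e f \<le> K * m f" if "f \<in> T" for f
    proof -
      have fB: "f \<in> bucket \<alpha> Ls i" using that TL LB by auto
      hence "f \<in> Ls" using Bs by auto
      hence "sig \<alpha> f / N \<ge> (1 + \<epsilon>) * \<beta>" using LsP by blast
      thus ?thesis unfolding K_def m_def
        by (rule abar_bound[OF pe assms(1) assms(2) assms(3) Np sig2[OF eB fB]])
    qed
    have "(\<Sum>f\<in>T. abar \<alpha> N \<beta> e f) \<le> (\<Sum>f\<in>T. K * m f)" using ab by (rule sum_mono)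
    also have "\<dots> = K * (\<Sum>f\<in>T. m f)" by (simp add: sum_distrib_left)
    finally have s1: "(\<Sum>f\<in>T. abar \<alpha> N \<beta> e f) \<le> K * (\<Sum>f\<in>T. m f)" .
    have "(\<Sum>f\<in>T. m f) \<le> 1 + 2/(\<beta>*c)"
    proof (cases "T = {}")
      case True then show ?thesis using cp assms by simp
    next
      case False
      obtain e0 where e0T: "e0 \<in> T" and e0min: "\<forall>f\<in>T. dcross e e0 \<le> dcross e f"
      proof -
        have "Min ((dcross e) ` T) \<in> (dcross e) ` T" using finT False by simp
        then obtain e0 where "e0 \<in> T" "dcross e e0 = Min ((dcross e) ` T)" by auto
        moreover have "\<forall>f\<in>T. Min ((dcross e) ` T) \<le> dcross e f" using finT by simp
        ultimately show ?thesis using that by auto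
      qed
      have e0L: "e0 \<in> L" using e0T TL by auto
      have e0B: "e0 \<in> bucket \<alpha> Ls i" using e0L LB by auto
      have e0p: "sig \<alpha> e0 > 0"
      proof -
        have "e0 \<in> Ls" using e0B Bs by auto
        have "(1 + \<epsilon>) * \<beta> > 0" using assms by simp
        hence "sig \<alpha> e0 / N > 0" using LsP \<open>e0 \<in> Ls\<close> by (meson less_le_trans)
        thus ?thesis using Np by (simp add: divide_pos_pos zero_less_divide_iff)
      qed
      define S where "S = (\<Sum>f\<in>L - {e0}. sigx \<alpha> f e0)"
      have sx0: "sigx \<alpha> f e0 \<ge> 0" if "f \<in> L" for f
      proof -
        have "f \<in> Ls" using that LB Bs by auto
        hence "pw f > 0" using LsP by blast
        thus ?thesis unfolding sigx_def by simp
      qed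
      have S0: "S \<ge> 0" unfolding S_def using sx0 by (intro sum_nonneg) auto
      have fe: "sig \<alpha> e0 / (N + S) \<ge> \<beta>" using feas e0L unfolding sinr_feasible_def S_def by auto
      have "\<beta> * (N + S) \<le> sig \<alpha> e0" using fe Np S0 by (simp add: field_simps)
      moreover have "\<beta> * N > 0" using Np assms by simp
      ultimately have Sb: "\<beta> * S \<le> sig \<alpha> e0" by (simp add: distrib_left)
      have lb: "sig \<alpha> e0 / 2 * (c * m f) \<le> sigx \<alpha> f e0" if "f \<in> T - {e0}" for f
      proof -
        have fL: "f \<in> L" and fne: "f \<noteq> e0" and fd: "dlen f \<ge> dlen e" using that TL unfolding T_def by auto
        have fB: "f \<in> bucket \<alpha> Ls i" using fL LB by auto
        have fLs: "f \<in> Ls" using fB Bs by auto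
        have Zp: "dcross f e0 > 0" using feas e0L fL fne unfolding sinr_feasible_def by auto
        have tr: "dcross f e0 \<le> dlen f + 2 * dcross e f" using e0min that by (intro tri) auto
        have D0: "dcross e f \<ge> 0" unfolding dcross_def by simp
        have "(pw f / dlen f powr \<alpha>) * (c * m f) \<le> pw f / dcross f e0 powr \<alpha>"
          unfolding c_def m_def using pe(2) fd D0 assms(1) Zp tr LsP fLs
          by (intro key_interf) auto
        hence A: "sig \<alpha> f * (c * m f) \<le> sigx \<alpha> f e0" unfolding sig_def sigx_def .
        have cm0: "c * m f \<ge> 0" using cp mm_ge0 unfolding m_def by simp
        have "sig \<alpha> e0 / 2 \<le> sig \<alpha> f" using sig2[OF e0B fB] by simp
        hence "sig \<alpha> e0 / 2 * (c * m f) \<le> sig \<alpha> f * (c * m f)" using cm0 by (rule mult_right_mono)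
        thus ?thesis using A by linarith
      qed
      have "(\<Sum>f\<in>T - {e0}. sig \<alpha> e0 / 2 * (c * m f)) \<le> (\<Sum>f\<in>T - {e0}. sigx \<alpha> f e0)"
        using lb by (rule sum_mono)
      also have "\<dots> \<le> S" unfolding S_def
        by (rule sum_mono2) (use finL TL sx0 in auto)
      finally have X: "(\<Sum>f\<in>T - {e0}. sig \<alpha> e0 / 2 * (c * m f)) \<le> S" .
      define M where "M = (\<Sum>f\<in>T - {e0}. m f)"
      have "(\<Sum>f\<in>T - {e0}. sig \<alpha> e0 / 2 * (c * m f)) = sig \<alpha> e0 / 2 * (c * M)"
        unfolding M_def by (simp only: sum_distrib_left)
      with X have X2: "sig \<alpha> e0 / 2 * (c * M) \<le> S" by simp
      have "\<beta> * (sig \<alpha> e0 / 2 * (c * M)) \<le> \<beta> * S"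
        using assms X2 by (intro mult_left_mono) auto
      hence X3: "\<beta> * (sig \<alpha> e0 / 2 * (c * M)) \<le> sig \<alpha> e0"
        using Sb by linarith
      have E: "\<beta> * (sig \<alpha> e0 / 2 * (c * M)) = sig \<alpha> e0 * ((\<beta> * c / 2) * M)" by (simp add: mult_ac)
      have "sig \<alpha> e0 * ((\<beta> * c / 2) * M) \<le> sig \<alpha> e0 * 1" using X3 E by linarith
      hence X4: "(\<beta> * c / 2) * M \<le> 1" using e0p mult_le_cancel_left_pos by blast
      have bc: "\<beta> * c / 2 > 0" using cp assms by simp
      have "M \<le> 1 / (\<beta> * c / 2)" using X4 bc by (simp add: pos_le_divide_eq mult.commute)
      hence "(\<Sum>f\<in>T - {e0}. m f) \<le> 2/(\<beta>*c)" unfolding M_def by simp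
      moreover have "(\<Sum>f\<in>T. m f) = m e0 + (\<Sum>f\<in>T - {e0}. m f)"
        using finT e0T by (simp add: sum.remove)
      moreover have "m e0 \<le> 1" unfolding m_def by (rule mm_le1)
      ultimately show ?thesis by linarith
    qed
    hence "K * (\<Sum>f\<in>T. m f) \<le> K * (1 + 2/(\<beta>*c))" using K1 by (intro mult_left_mono) auto
    hence "K * (\<Sum>f\<in>T. m f) \<le> C" unfolding C_def .
    with s1 show "(\<Sum>e'\<in>{e'\<in>L. dlen e' \<ge> dlen e}. abar \<alpha> N \<beta> e e') \<le> C"
      unfolding T_def by linarith
  qed
qed

end
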